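(* Let $k\ge 4$ be an integer, let $G'$ be an acyclic oriented graph with no directed path with $k$ arcs, and let $W$ be an oriented path in $G'$. Then: (1) if $W$ has exactly $kn$ arcs for some positive integer $n$, then $|W^+|\le (k-1)n$ and $|W^-|\ge n$; (2) if the final arc of $W$ is a backward arc, then there is a positive integer $n$ such that $|W^+|\le (k-1)n$ and $|W^-|\ge n$.
   Context: An oriented path $W=w_1w_2\cdots w_t$ in $G'$ is a path in the underlying graph of $G'$ traversed from $w_1$ to $w_t$; an arc of $G'$ between consecutive vertices $w_i,w_{i+1}$ is a forward arc of $W$ if it is $(w_i,w_{i+1})$ and a backward arc if it is $(w_{i+1},w_i)$. $W^+$ and $W^-$ denote the sets of forward and backward arcs of $W$, respectively; the final arc is the one between $w_{t-1}$ and $w_t$. *)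

theory Defs
  imports Main
begin

definition oriented_graph :: "'a set \<Rightarrow> ('a \<times> 'a) set \<Rightarrow> bool" where
  "oriented_graph V A \<longleftrightarrow> A \<subseteq> V \<times> V \<and> (\<forall>u v. (u, v) \<in> A \<longrightarrow> (v, u) \<notin> A)"

text \<open>A directed path, given by its vertex list (distinct vertices, consecutive ones joined
  by an arc in the forward direction). It has length ps - 1 arcs.\<close>
definition directed_path :: "('a \<times> 'a) set \<Rightarrow> 'a list \<Rightarrow> bool" where
  "directed_path A ps \<longleftrightarrow> ps \<noteq> [] \<and> distinct ps \<and>
     (\<forall>i. Suc i < length ps \<longrightarrow> (ps ! i, ps ! Suc i) \<in> A)"

definition oriented_path :: "'a set \<Rightarrow> ('a \<times> 'a) set \<Rightarrow> 'a list \<Rightarrow> bool" where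
  "oriented_path V A W \<longleftrightarrow> W \<noteq> [] \<and> distinct W \<and> set W \<subseteq> V \<and>
     (\<forall>i. Suc i < length W \<longrightarrow> (W ! i, W ! Suc i) \<in> A \<or> (W ! Suc i, W ! i) \<in> A)"

definition fwd_arcs :: "('a \<times> 'a) set \<Rightarrow> 'a list \<Rightarrow> ('a \<times> 'a) set" where
  "fwd_arcs A W = {(W ! i, W ! Suc i) | i. Suc i < length W \<and> (W ! i, W ! Suc i) \<in> A}"

definition bwd_arcs :: "('a \<times> 'a) set \<Rightarrow> 'a list \<Rightarrow> ('a \<times> 'a) set" where
  "bwd_arcs A W = {(W ! Suc i, W ! i) | i. Suc i < length W \<and> (W ! Suc i, W ! i) \<in> A}"

definition num_arcs :: "'a list \<Rightarrow> nat" where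
  "num_arcs W = length W - 1"

definition final_arc_backward :: "('a \<times> 'a) set \<Rightarrow> 'a list \<Rightarrow> bool" where
  "final_arc_backward A W \<longleftrightarrow> 2 \<le> length W \<and> (last W, W ! (length W - 2)) \<in> A"

end

theory Submission
  imports Defs
begin

definition norun :: "nat \<Rightarrow> bool list \<Rightarrow> bool" where
  "norun k bs \<longleftrightarrow> (\<forall>us vs. bs \<noteq> us @ replicate k True @ vs)"

lemma norun_prefix: "norun k (ys @ zs) \<Longrightarrow> norun k ys"
  unfolding norun_def by (intro allI notI, drule_tac x=us in spec, drule_tac x="vs @ zs" in spec) simp

lemma norun_suffix: "norun k (ys @ zs) \<Longrightarrow> norun k zs"
  unfolding norun_def by (intro allI notI, drule_tac x="ys @ us" in spec, drule_tac x="vs" in spec) simp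

lemma lemA:
  assumes "0 < k" "norun k xs"
  shows "length (filter id xs) \<le> (k - 1) * (length (filter Not xs) + 1)"
  using assms(2)
proof (induction "length xs" arbitrary: xs rule: less_induct)
  case less
  show ?case
  proof (cases "False \<in> set xs")
    case True
    then obtain ys zs where xs: "xs = ys @ False # zs" and nz: "False \<notin> set zs"
      using split_list_last by metis
    have az: "\<forall>x\<in>set zs. x = True" using nz by (metis (full_types))
    then have zs: "zs = replicate (length zs) True"
      by (metis replicate_length_same)
    have "length zs < k"
    proof (rule ccontr)
      assume "\<not> length zs < k"
      then have "zs = replicate (k + (length zs - k)) True" using zs by simp
      then have "zs = replicate k True @ replicate (length zs - k) True"
        by (simp only: replicate_add)
      then have "xs = (ys @ [False]) @ replicate k True @ replicate (length zs - k) True"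
        using xs by simp
      then show False using less.prems unfolding norun_def by blast
    qed
    have ny: "norun k ys" using less.prems xs norun_prefix by blast
    have IH: "length (filter id ys) \<le> (k - 1) * (length (filter Not ys) + 1)"
      using less.hyps[OF _ ny] xs by simp
    have "length (filter id zs) = length zs"
      by (subst zs, simp)
    moreover have "length (filter Not zs) = 0" using az by (simp add: filter_empty_conv)
    ultimately show ?thesis using IH xs \<open>length zs < k\<close>
      by (simp add: algebra_simps)
  next
    case False
    then have "\<forall>x\<in>set xs. x = True" by (metis (full_types))
    then have xs: "xs = replicate (length xs) True"
      by (metis replicate_length_same)
    have "length xs < k"
    proof (rule ccontr)
      assume "\<not> length xs < k"
      then have "xs = replicate (k + (length xs - k)) True" using xs by simp
      then have "xs = [] @ replicate k True @ replicate (length xs - k) True"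
        by (simp only: replicate_add append_Nil)
      then show False using less.prems unfolding norun_def by blast
    qed
    moreover have "length (filter id xs) = length xs"
      by (subst xs, simp)
    ultimately show ?thesis by simp
  qed
qed

lemma lemB:
  assumes "norun k xs" "length xs = k * n"
  shows "n \<le> length (filter Not xs)"
  using assms
proof (induction n arbitrary: xs)
  case 0
  then show ?case by simp
next
  case (Suc n)
  have sp: "xs = take k xs @ drop k xs" by simp
  have "False \<in> set (take k xs)"
  proof (rule ccontr)
    assume "False \<notin> set (take k xs)"
    then have "\<forall>x\<in>set (take k xs). x = True" by (metis (full_types))
    then have "take k xs = replicate (length (take k xs)) True"
      by (metis replicate_length_same)
    moreover have "length (take k xs) = k" using Suc.prems by simp
    ultimately have "xs = [] @ replicate k True @ drop k xs" using sp by simp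
    then show False using Suc.prems unfolding norun_def by blast
  qed
  then have "filter Not (take k xs) \<noteq> []" by (auto simp: filter_empty_conv)
  then have "0 < length (filter Not (take k xs))" by (simp del: filter_empty_conv)
  moreover have "n \<le> length (filter Not (drop k xs))"
    using Suc.IH[OF norun_suffix[of k "take k xs"]] Suc.prems sp by simp
  moreover have "length (filter Not xs) = length (filter Not (take k xs)) + length (filter Not (drop k xs))"
    by (subst sp, simp only: filter_append length_append)
  ultimately show ?case by linarith
qed

theorem lemma2:
  fixes V :: "'a set" and A :: "('a \<times> 'a) set" and W :: "'a list" and k :: nat
  assumes "4 \<le> k"
    and "finite V"
    and "oriented_graph V A"
    and "acyclic A"
    and "\<not> (\<exists>ps. directed_path A ps \<and> length ps = k + 1)"
    and "oriented_path V A W"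
  shows "(\<forall>n::nat. 0 < n \<and> num_arcs W = k * n \<longrightarrow>
             card (fwd_arcs A W) \<le> (k - 1) * n \<and> n \<le> card (bwd_arcs A W))
       \<and> (final_arc_backward A W \<longrightarrow>
             (\<exists>n::nat. 0 < n \<and> card (fwd_arcs A W) \<le> (k - 1) * n \<and> n \<le> card (bwd_arcs A W)))"
proof -
  define m where "m = length W - 1"
  define bs where "bs = map (\<lambda>i. (W ! i, W ! Suc i) \<in> A) [0..<m]"
  have Wne: "W \<noteq> []" and dW: "distinct W"
    and arc: "\<And>i. Suc i < length W \<Longrightarrow> (W ! i, W ! Suc i) \<in> A \<or> (W ! Suc i, W ! i) \<in> A"
    using assms(6) unfolding oriented_path_def by auto
  have anti: "\<And>u v. (u, v) \<in> A \<Longrightarrow> (v, u) \<notin> A"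
    using assms(3) unfolding oriented_graph_def by auto
  have lW: "length W = Suc m" using Wne m_def by simp
  have lbs: "length bs = m" by (simp add: bs_def)
  have bsi: "\<And>i. i < m \<Longrightarrow> bs ! i = ((W ! i, W ! Suc i) \<in> A)" by (simp add: bs_def)
  have bsn: "\<And>i. i < m \<Longrightarrow> (\<not> bs ! i) = ((W ! Suc i, W ! i) \<in> A)"
  proof -
    fix i assume i: "i < m"
    then have "Suc i < length W" using lW by simp
    then show "(\<not> bs ! i) = ((W ! Suc i, W ! i) \<in> A)"
      using arc[of i] anti[of "W ! i" "W ! Suc i"] bsi[OF i] by blast
  qed
  have inj1: "inj_on (\<lambda>i. (W ! i, W ! Suc i)) {i. i < m \<and> P i}" for P
    using lW by (intro inj_onI) (auto simp: nth_eq_iff_index_eq[OF dW])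
  have inj2: "inj_on (\<lambda>i. (W ! Suc i, W ! i)) {i. i < m \<and> P i}" for P
    using lW by (intro inj_onI) (auto simp: nth_eq_iff_index_eq[OF dW])
  have "fwd_arcs A W = (\<lambda>i. (W ! i, W ! Suc i)) ` {i. i < m \<and> id (bs ! i)}"
    unfolding fwd_arcs_def using lW by (auto simp: bsi)
  then have cf: "card (fwd_arcs A W) = length (filter id bs)"
    using inj1 by (simp add: card_image length_filter_conv_card lbs)
  have "bwd_arcs A W = (\<lambda>i. (W ! Suc i, W ! i)) ` {i. i < m \<and> \<not> (bs ! i)}"
    unfolding bwd_arcs_def using lW by (auto simp: bsn)
  then have cb: "card (bwd_arcs A W) = length (filter Not bs)"
    using inj2 by (simp add: card_image length_filter_conv_card lbs)
  have nr: "norun k bs"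
    unfolding norun_def
  proof (intro allI notI)
    fix us vs assume h: "bs = us @ replicate k True @ vs"
    define j where "j = length us"
    have "length bs = length us + k + length vs" using h by simp
    then have jk: "j + k \<le> m" using lbs j_def by linarith
    have tr: "\<And>i. i < k \<Longrightarrow> bs ! (j + i) = True"
      using h j_def by (simp add: nth_append)
    define ps where "ps = take (k + 1) (drop j W)"
    have lps: "length ps = k + 1" using jk lW ps_def by simp
    have "directed_path A ps"
      unfolding directed_path_def
    proof (intro conjI allI impI)
      show "ps \<noteq> []" using lps by auto
      show "distinct ps" using dW ps_def by (simp add: distinct_drop distinct_take)
      fix i assume "Suc i < length ps"
      then have ik: "i < k" using lps by simp
      have "ps ! i = W ! (j + i)" "ps ! Suc i = W ! Suc (j + i)"
        using ik jk lW by (simp_all add: ps_def)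
      then show "(ps ! i, ps ! Suc i) \<in> A"
        using tr[OF ik] bsi[of "j + i"] ik jk by simp
    qed
    then show False using assms(5) lps by blast
  qed
  have sum: "length (filter id bs) + length (filter Not bs) = m"
    using sum_length_filter_compl[of id bs] lbs by simp
  have k0: "0 < k" using assms(1) by simp
  have P1: "\<forall>n::nat. 0 < n \<and> num_arcs W = k * n \<longrightarrow>
             card (fwd_arcs A W) \<le> (k - 1) * n \<and> n \<le> card (bwd_arcs A W)"
  proof (intro allI impI)
    fix n :: nat assume h: "0 < n \<and> num_arcs W = k * n"
    then have "m = k * n" unfolding num_arcs_def m_def by simp
    then have "n \<le> length (filter Not bs)" using lemB[OF nr] lbs by simp
    then show "card (fwd_arcs A W) \<le> (k - 1) * n \<and> n \<le> card (bwd_arcs A W)"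
      using sum \<open>m = k * n\<close> cf cb by (simp add: diff_mult_distrib)
  qed
  have P2: "final_arc_backward A W \<longrightarrow>
             (\<exists>n::nat. 0 < n \<and> card (fwd_arcs A W) \<le> (k - 1) * n \<and> n \<le> card (bwd_arcs A W))"
  proof
    assume "final_arc_backward A W"
    then have l2: "2 \<le> length W" and fa: "(last W, W ! (length W - 2)) \<in> A"
      unfolding final_arc_backward_def by auto
    have m1: "0 < m" using l2 lW by simp
    have "last W = W ! Suc (m - 1)" using Wne lW m1 by (simp add: last_conv_nth)
    moreover have "W ! (length W - 2) = W ! (m - 1)" using lW by simp
    ultimately have "(W ! Suc (m - 1), W ! (m - 1)) \<in> A" using fa by simp
    then have lf: "bs ! (m - 1) = False" using bsi[of "m - 1"] m1 anti by auto
    have bsd: "bs = take (m - 1) bs @ [False]"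
    proof -
      have "bs = take (m - 1) bs @ drop (m - 1) bs" by simp
      moreover have "drop (m - 1) bs = [bs ! (m - 1)]"
        using lbs m1 Cons_nth_drop_Suc[of "m - 1" bs] by simp
      ultimately show ?thesis using lf by (metis append_take_drop_id)
    qed
    have nr': "norun k (take (m - 1) bs)"
      by (rule norun_prefix[of k _ "[False]"], subst bsd[symmetric], rule nr)
    have "length (filter id (take (m - 1) bs)) \<le> (k - 1) * (length (filter Not (take (m - 1) bs)) + 1)"
      using lemA[OF k0 nr'] .
    moreover have "length (filter id bs) = length (filter id (take (m - 1) bs))"
      "length (filter Not bs) = length (filter Not (take (m - 1) bs)) + 1"
      by (subst bsd, simp)+
    ultimately show "\<exists>n::nat. 0 < n \<and> card (fwd_arcs A W) \<le> (k - 1) * n \<and> n \<le> card (bwd_arcs A W)"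
      using cf cb by (intro exI[of _ "length (filter Not bs)"]) simp
  qed
  show ?thesis using P1 P2 by blast
qed

end
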